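(* Let $(M,g,J,\kappa)$ be an almost Kähler manifold. Assume that $$\widetilde R(Z,\overline Z,W,\overline W)=R(Z,\overline Z,W,\overline W)$$ for all complex vector fields $Z,W$ of type $(1,0)$ (equivalently, $\widetilde R(X,JX,Y,JY)=R(X,JX,Y,JY)$ for all real vector fields $X,Y$). Then $J$ is integrable, i.e. $(M,g,J,\kappa)$ is a Kähler manifold.
   Context: An almost Kähler manifold $(M,g,J,\kappa)$: $\kappa$ a symplectic form, $J$ an almost complex structure with $g(\cdot,\cdot)=\kappa(\cdot,J\cdot)$ a $J$-Hermitian Riemannian metric; Kähler means $J$ integrable. $\nabla$ is the Levi-Civita connection of $g$; the Hermitian connection is $\widetilde\nabla_XY=\nabla_XY-\tfrac12 J(\nabla_XJ)Y$. For a connection $D$, its curvature 4-tensor is $g(D_XD_YZ-D_YD_XZ-D_{[X,Y]}Z,W)$; $R,\widetilde R$ are those of $\nabla,\widetilde\nabla$, extended complex-multilinearly. Type $(1,0)$ means a section of the $+i$-eigenbundle of $J$ in $TM\otimes\mathbb C$. *)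

theory Defs
  imports "HOL-Analysis.Analysis"
begin

text \<open>Local (chart) model: the manifold is an open set U in real^'n; tensor fields are
 given by their component fields. Vector fields are maps real^'n => real^'n.\<close>

definition pd :: "(real^'n::finite \<Rightarrow> real) \<Rightarrow> 'n \<Rightarrow> real^'n \<Rightarrow> real" where
  "pd f i x = frechet_derivative f (at x) (axis i 1)"

coinductive cinf :: "(real^'n::finite) set \<Rightarrow> (real^'n \<Rightarrow> real) \<Rightarrow> bool" for U where
  "(\<forall>x\<in>U. f differentiable (at x)) \<Longrightarrow> (\<forall>i. cinf U (pd f i)) \<Longrightarrow> cinf U f"

definition smooth_vf :: "(real^'n::finite) set \<Rightarrow> (real^'n \<Rightarrow> real^'n) \<Rightarrow> bool" where
  "smooth_vf U X = (\<forall>i. cinf U (\<lambda>x. X x $ i))"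

definition smooth_mf :: "(real^'n::finite) set \<Rightarrow> (real^'n \<Rightarrow> real^'n^'n) \<Rightarrow> bool" where
  "smooth_mf U A = (\<forall>i j. cinf U (\<lambda>x. A x $ i $ j))"

definition bil :: "real^'n^'n \<Rightarrow> real^'n \<Rightarrow> real^'n \<Rightarrow> real" where
  "bil A u v = u \<bullet> (A *v v)"

definition christoffel ::
  "(real^'n::finite \<Rightarrow> real^'n^'n) \<Rightarrow> real^'n \<Rightarrow> real^'n \<Rightarrow> real^'n \<Rightarrow> real^'n" where
  "christoffel g p u v = matrix_inv (g p) *v (\<chi> l.
      (bil (frechet_derivative g (at p) u) v (axis l 1)
     + bil (frechet_derivative g (at p) v) u (axis l 1)
     - bil (frechet_derivative g (at p) (axis l 1)) u v) / 2)"

definition lc :: "(real^'n::finite \<Rightarrow> real^'n^'n) \<Rightarrow> (real^'n \<Rightarrow> real^'n) \<Rightarrow> (real^'n \<Rightarrow> real^'n)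
    \<Rightarrow> real^'n \<Rightarrow> real^'n" where
  "lc g X Y p = frechet_derivative Y (at p) (X p) + christoffel g p (X p) (Y p)"

definition app :: "(real^'n::finite \<Rightarrow> real^'n^'n) \<Rightarrow> (real^'n \<Rightarrow> real^'n) \<Rightarrow> real^'n \<Rightarrow> real^'n" where
  "app J X = (\<lambda>p. J p *v X p)"

definition lie :: "(real^'n::finite \<Rightarrow> real^'n) \<Rightarrow> (real^'n \<Rightarrow> real^'n) \<Rightarrow> real^'n \<Rightarrow> real^'n" where
  "lie X Y p = frechet_derivative Y (at p) (X p) - frechet_derivative X (at p) (Y p)"

definition herm :: "(real^'n::finite \<Rightarrow> real^'n^'n) \<Rightarrow> (real^'n \<Rightarrow> real^'n^'n)
    \<Rightarrow> (real^'n \<Rightarrow> real^'n) \<Rightarrow> (real^'n \<Rightarrow> real^'n) \<Rightarrow> real^'n \<Rightarrow> real^'n" where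
  "herm g J X Y p = lc g X Y p - (1/2) *\<^sub>R (J p *v (lc g X (app J Y) p - J p *v lc g X Y p))"

definition curv :: "(real^'n::finite \<Rightarrow> real^'n^'n)
    \<Rightarrow> ((real^'n \<Rightarrow> real^'n) \<Rightarrow> (real^'n \<Rightarrow> real^'n) \<Rightarrow> real^'n \<Rightarrow> real^'n)
    \<Rightarrow> (real^'n \<Rightarrow> real^'n) \<Rightarrow> (real^'n \<Rightarrow> real^'n) \<Rightarrow> (real^'n \<Rightarrow> real^'n) \<Rightarrow> (real^'n \<Rightarrow> real^'n)
    \<Rightarrow> real^'n \<Rightarrow> real" where
  "curv g D X Y Z W p = bil (g p) (D X (D Y Z) p - D Y (D X Z) p - D (lie X Y) Z p) (W p)"

definition nijenhuis :: "(real^'n::finite \<Rightarrow> real^'n^'n) \<Rightarrow> (real^'n \<Rightarrow> real^'n) \<Rightarrow> (real^'n \<Rightarrow> real^'n)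
    \<Rightarrow> real^'n \<Rightarrow> real^'n" where
  "nijenhuis J X Y p = lie (app J X) (app J Y) p - J p *v lie (app J X) Y p
      - J p *v lie X (app J Y) p - lie X Y p"

definition integrable_acs :: "(real^'n::finite) set \<Rightarrow> (real^'n \<Rightarrow> real^'n^'n) \<Rightarrow> bool" where
  "integrable_acs U J = (\<forall>X Y. smooth_vf U X \<longrightarrow> smooth_vf U Y \<longrightarrow> (\<forall>p\<in>U. nijenhuis J X Y p = 0))"

definition almost_kahler :: "(real^'n::finite) set \<Rightarrow> (real^'n \<Rightarrow> real^'n^'n) \<Rightarrow> (real^'n \<Rightarrow> real^'n^'n)
    \<Rightarrow> (real^'n \<Rightarrow> real^'n^'n) \<Rightarrow> bool" where
  "almost_kahler U g J \<kappa> \<longleftrightarrow> open U \<and> smooth_mf U g \<and> smooth_mf U J \<and> smooth_mf U \<kappa> \<and>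
    (\<forall>p\<in>U. J p ** J p = - mat 1) \<and>
    (\<forall>p\<in>U. transpose (\<kappa> p) = - \<kappa> p \<and> invertible (\<kappa> p)) \<and>
    (\<forall>p\<in>U. \<forall>i j k.
        frechet_derivative \<kappa> (at p) (axis i 1) $ j $ k
      + frechet_derivative \<kappa> (at p) (axis j 1) $ k $ i
      + frechet_derivative \<kappa> (at p) (axis k 1) $ i $ j = 0) \<and>
    (\<forall>p\<in>U. g p = \<kappa> p ** J p) \<and>
    (\<forall>p\<in>U. transpose (g p) = g p \<and> (\<forall>v. v \<noteq> 0 \<longrightarrow> bil (g p) v v > 0)) \<and>
    (\<forall>p\<in>U. transpose (J p) ** g p ** J p = g p)"

end

theory Submission
  imports Defs
begin

section \<open>Componentwise calculus\<close>

lemma hd_vec: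
  fixes f :: "'a::real_normed_vector \<Rightarrow> 'b::euclidean_space^'n"
  shows "(f has_derivative f') (at p) \<longleftrightarrow> (\<forall>i. ((\<lambda>x. f x $ i) has_derivative (\<lambda>h. f' h $ i)) (at p))"
proof -
  have "(f has_derivative f') (at p) \<longleftrightarrow> (\<forall>i\<in>Basis. ((\<lambda>x. f x \<bullet> i) has_derivative (\<lambda>x. f' x \<bullet> i)) (at p))"
    using has_derivative_componentwise_within[of f f' p UNIV] by simp
  also have "\<dots> \<longleftrightarrow> (\<forall>i. \<forall>u\<in>Basis. ((\<lambda>x. f x $ i \<bullet> u) has_derivative (\<lambda>h. f' h $ i \<bullet> u)) (at p))"
    unfolding Basis_vec_def by (auto simp: inner_axis)
  also have "\<dots> \<longleftrightarrow> (\<forall>i. ((\<lambda>x. f x $ i) has_derivative (\<lambda>h. f' h $ i)) (at p))"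
    using has_derivative_componentwise_within[of "\<lambda>x. f x $ _" "\<lambda>h. f' h $ _" p UNIV] by simp
  finally show ?thesis .
qed

lemma diff_vec:
  fixes f :: "'a::real_normed_vector \<Rightarrow> 'b::euclidean_space^'n"
  shows "f differentiable (at p) \<longleftrightarrow> (\<forall>i. (\<lambda>x. f x $ i) differentiable (at p))"
proof
  assume "f differentiable (at p)"
  then obtain f' where "(f has_derivative f') (at p)" by (auto simp: differentiable_def)
  then show "\<forall>i. (\<lambda>x. f x $ i) differentiable (at p)"
    by (auto simp: hd_vec differentiable_def)
next
  assume "\<forall>i. (\<lambda>x. f x $ i) differentiable (at p)"
  then obtain F where F: "\<And>i. ((\<lambda>x. f x $ i) has_derivative F i) (at p)"
    unfolding differentiable_def by metis
  have "(f has_derivative (\<lambda>h. \<chi> i. F i h)) (at p)"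
    unfolding hd_vec using F by simp
  then show "f differentiable (at p)" by (auto simp: differentiable_def)
qed

lemma fd_vec:
  fixes f :: "'a::real_normed_vector \<Rightarrow> 'b::euclidean_space^'n"
  assumes "f differentiable (at p)"
  shows "frechet_derivative f (at p) h $ i = frechet_derivative (\<lambda>x. f x $ i) (at p) h"
proof -
  have "(f has_derivative frechet_derivative f (at p)) (at p)"
    using assms frechet_derivative_works by blast
  then have "((\<lambda>x. f x $ i) has_derivative (\<lambda>h. frechet_derivative f (at p) h $ i)) (at p)"
    unfolding hd_vec by blast
  from frechet_derivative_at[OF this] show ?thesis by metis
qed

lemma fd_local:
  assumes "open U" "p \<in> U" "\<And>q. q \<in> U \<Longrightarrow> f q = g q"
  shows "frechet_derivative f (at p) = frechet_derivative g (at p)"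
proof -
  have "\<And>D. (f has_derivative D) (at p) \<longleftrightarrow> (g has_derivative D) (at p)"
    using has_derivative_transform_within_open[OF _ assms(1,2), of f _ UNIV g]
          has_derivative_transform_within_open[OF _ assms(1,2), of g _ UNIV f] assms(3)
    by auto
  then show ?thesis unfolding frechet_derivative_def by simp
qed

lemma diff_local:
  assumes "open U" "p \<in> U" "\<And>q. q \<in> U \<Longrightarrow> f q = g q" "f differentiable (at p)"
  shows "g differentiable (at p)"
  using has_derivative_transform_within_open[OF _ assms(1,2), of f _ UNIV g] assms(3,4)
  by (auto simp: differentiable_def)

lemma fd_basis:
  fixes f :: "real^'n \<Rightarrow> real"
  assumes "f differentiable (at p)"
  shows "frechet_derivative f (at p) v = (\<Sum>i\<in>UNIV. v$i * pd f i p)"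
proof -
  have lin: "linear (frechet_derivative f (at p))"
    using assms frechet_derivative_works has_derivative_linear by blast
  have "frechet_derivative f (at p) v = frechet_derivative f (at p) (\<Sum>i\<in>UNIV. v$i *s axis i 1)"
    by (simp add: basis_expansion)
  also have "\<dots> = (\<Sum>i\<in>UNIV. v$i * frechet_derivative f (at p) (axis i 1))"
    using lin by (simp add: linear_sum linear_scale scalar_mult_eq_scaleR)
  finally show ?thesis by (simp add: pd_def)
qed

lemma fd_real_works:
  fixes f :: "'a::real_normed_vector \<Rightarrow> real"
  assumes "f differentiable (at p)"
  shows "(f has_derivative frechet_derivative f (at p)) (at p)"
  using assms frechet_derivative_works by blast

lemma fd_add:
  assumes "f differentiable (at p)" "g differentiable (at p)"
  shows "frechet_derivative (\<lambda>x. f x + g x) (at p) h = frechet_derivative f (at p) h + frechet_derivative g (at p) h"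
proof -
  have "((\<lambda>x. f x + g x) has_derivative (\<lambda>h. frechet_derivative f (at p) h + frechet_derivative g (at p) h)) (at p)"
    using assms by (intro has_derivative_add) (auto simp: frechet_derivative_works)
  from frechet_derivative_at[OF this] show ?thesis by metis
qed

lemma fd_diff:
  assumes "f differentiable (at p)" "g differentiable (at p)"
  shows "frechet_derivative (\<lambda>x. f x - g x) (at p) h = frechet_derivative f (at p) h - frechet_derivative g (at p) h"
proof -
  have "((\<lambda>x. f x - g x) has_derivative (\<lambda>h. frechet_derivative f (at p) h - frechet_derivative g (at p) h)) (at p)"
    using assms by (intro has_derivative_diff) (auto simp: frechet_derivative_works)
  from frechet_derivative_at[OF this] show ?thesis by metis
qed

lemma fd_scale:
  assumes "f differentiable (at p)"
  shows "frechet_derivative (\<lambda>x. c *\<^sub>R f x) (at p) h = c *\<^sub>R frechet_derivative f (at p) h"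
proof -
  have "((\<lambda>x. c *\<^sub>R f x) has_derivative (\<lambda>h. c *\<^sub>R frechet_derivative f (at p) h)) (at p)"
    using assms by (intro has_derivative_scaleR_right) (auto simp: frechet_derivative_works)
  from frechet_derivative_at[OF this] show ?thesis by metis
qed

lemma fd_mult:
  fixes f g :: "'a::real_normed_vector \<Rightarrow> real"
  assumes "f differentiable (at p)" "g differentiable (at p)"
  shows "frechet_derivative (\<lambda>x. f x * g x) (at p) h = frechet_derivative f (at p) h * g p + f p * frechet_derivative g (at p) h"
proof -
  have "((\<lambda>x. f x * g x) has_derivative (\<lambda>h. f p * frechet_derivative g (at p) h + frechet_derivative f (at p) h * g p)) (at p)"
    using assms by (intro has_derivative_mult) (auto simp: frechet_derivative_works)
  from frechet_derivative_at[OF this] show ?thesis by (metis add.commute)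
qed

lemma fd_sum:
  fixes f :: "'i \<Rightarrow> 'a::real_normed_vector \<Rightarrow> 'b::real_normed_vector"
  assumes "finite S" "\<And>i. i \<in> S \<Longrightarrow> f i differentiable (at p)"
  shows "frechet_derivative (\<lambda>x. \<Sum>i\<in>S. f i x) (at p) h = (\<Sum>i\<in>S. frechet_derivative (f i) (at p) h)"
proof -
  have "((\<lambda>x. \<Sum>i\<in>S. f i x) has_derivative (\<lambda>h. \<Sum>i\<in>S. frechet_derivative (f i) (at p) h)) (at p)"
    using assms by (intro has_derivative_sum) (auto simp: frechet_derivative_works)
  from frechet_derivative_at[OF this] show ?thesis by metis
qed

lemma fd_const: "frechet_derivative (\<lambda>x. c) (at p) h = 0"
proof -
  have "((\<lambda>x. c) has_derivative (\<lambda>h. 0)) (at p)" by simp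
  from frechet_derivative_at[OF this] show ?thesis by metis
qed

lemma fd_linear:
  assumes "f differentiable (at p)"
  shows "linear (frechet_derivative f (at p))"
  using assms frechet_derivative_works has_derivative_linear by blast

lemma differentiable_prod':
  fixes f :: "'i \<Rightarrow> 'a::real_normed_vector \<Rightarrow> real"
  assumes "finite S" "\<And>i. i \<in> S \<Longrightarrow> f i differentiable (at p)"
  shows "(\<lambda>x. \<Prod>i\<in>S. f i x) differentiable (at p)"
proof -
  obtain F where "\<And>i. i \<in> S \<Longrightarrow> (f i has_derivative F i) (at p)"
    using assms(2) unfolding differentiable_def by metis
  then show ?thesis unfolding differentiable_def
    using has_derivative_prod[of S f F p UNIV] by blast
qed

section \<open>Smooth functions\<close>

lemma cinf_diff: "cinf U f \<Longrightarrow> x \<in> U \<Longrightarrow> f differentiable (at x)"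
  by (erule cinf.cases) auto

lemma cinf_pd: "cinf U f \<Longrightarrow> cinf U (pd f i)"
  by (erule cinf.cases) auto

inductive pc :: "(real^'n::finite) set \<Rightarrow> (real^'n \<Rightarrow> real) \<Rightarrow> bool" for U where
  base: "cinf U f \<Longrightarrow> pc U f"
| const: "pc U (\<lambda>x. c)"
| add: "pc U f \<Longrightarrow> pc U g \<Longrightarrow> pc U (\<lambda>x. f x + g x)"
| mult: "pc U f \<Longrightarrow> pc U g \<Longrightarrow> pc U (\<lambda>x. f x * g x)"

lemma pc_diff: "pc U f \<Longrightarrow> x \<in> U \<Longrightarrow> f differentiable (at x)"
  by (induction rule: pc.induct) (auto simp: cinf_diff)

lemma pc_pd:
  assumes "pc U f"
  shows "\<exists>f'. pc U f' \<and> (\<forall>x\<in>U. pd f i x = f' x)"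
  using assms
proof (induction rule: pc.induct)
  case (base f)
  then show ?case using cinf_pd pc.base by blast
next
  case (const c)
  then show ?case by (intro exI[of _ "\<lambda>x. 0"]) (auto simp: pd_def fd_const intro: pc.const)
next
  case (add f g)
  then obtain f' g' where "pc U f'" "\<forall>x\<in>U. pd f i x = f' x" "pc U g'" "\<forall>x\<in>U. pd g i x = g' x" by blast
  then show ?case
    by (intro exI[of _ "\<lambda>x. f' x + g' x"])
       (auto simp: pd_def fd_add pc_diff[OF add.hyps(1)] pc_diff[OF add.hyps(2)] intro: pc.add)
next
  case (mult f g)
  then obtain f' g' where "pc U f'" "\<forall>x\<in>U. pd f i x = f' x" "pc U g'" "\<forall>x\<in>U. pd g i x = g' x" by blast
  then show ?case
    by (intro exI[of _ "\<lambda>x. f' x * g x + f x * g' x"])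
       (auto simp: pd_def fd_mult pc_diff[OF mult.hyps(1)] pc_diff[OF mult.hyps(2)] intro!: pc.add pc.mult mult.hyps)
qed

lemma pc_cinf_gen:
  assumes U: "open U" and "pc U g" "\<forall>x\<in>U. f x = g x"
  shows "cinf U f"
proof -
  have "\<exists>f'. pc U f' \<and> (\<forall>x\<in>U. f x = f' x)" using assms by blast
  then show ?thesis
  proof (coinduction arbitrary: f)
    case (cinf h)
    then obtain f where f: "pc U f" "\<forall>x\<in>U. h x = f x" by blast
    have d: "\<forall>x\<in>U. h differentiable (at x)"
    proof
      fix x assume x: "x \<in> U"
      show "h differentiable (at x)"
        by (rule diff_local[OF U x, of f]) (use f pc_diff[OF f(1) x] x in auto)
    qed
    have P: "\<exists>f'. pc U f' \<and> (\<forall>x\<in>U. pd h i x = f' x)" for i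
    proof -
      obtain f' where f': "pc U f'" "\<forall>x\<in>U. pd f i x = f' x" using pc_pd[OF f(1)] by blast
      have "\<forall>x\<in>U. pd h i x = pd f i x"
      proof
        fix x assume x: "x \<in> U"
        have "frechet_derivative h (at x) = frechet_derivative f (at x)"
          by (rule fd_local[OF U x]) (use f in auto)
        then show "pd h i x = pd f i x" by (simp add: pd_def)
      qed
      with f' show ?thesis by auto
    qed
    show ?case
      by (rule exI[of _ h]) (use d P in auto)
  qed
qed

lemma pc_cinf: "open U \<Longrightarrow> pc U f \<Longrightarrow> cinf U f"
  using pc_cinf_gen by blast

lemma cinf_cong: "open U \<Longrightarrow> cinf U f \<Longrightarrow> (\<And>x. x \<in> U \<Longrightarrow> h x = f x) \<Longrightarrow> cinf U h"
  using pc_cinf_gen[of U f h] pc.base[of U f] by auto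

lemma pc_sum: "finite S \<Longrightarrow> (\<And>i. i \<in> S \<Longrightarrow> pc U (f i)) \<Longrightarrow> pc U (\<lambda>x. \<Sum>i\<in>S. f i x)"
proof (induction S rule: finite_induct)
  case empty
  then show ?case using pc.const[of U 0] by simp
next
  case (insert a S)
  then show ?case using pc.add[of U "f a" "\<lambda>x. \<Sum>i\<in>S. f i x"] by simp
qed

lemma cinf_add: "open U \<Longrightarrow> cinf U f \<Longrightarrow> cinf U g \<Longrightarrow> cinf U (\<lambda>x. f x + g x)"
  using pc_cinf pc.add pc.base by metis
lemma cinf_mult: "open U \<Longrightarrow> cinf U f \<Longrightarrow> cinf U g \<Longrightarrow> cinf U (\<lambda>x. f x * g x)"
  using pc_cinf pc.mult pc.base by metis
lemma cinf_const: "open U \<Longrightarrow> cinf U (\<lambda>x. c)"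
  using pc_cinf pc.const by metis
lemma cinf_sum: "open U \<Longrightarrow> finite S \<Longrightarrow> (\<And>i. i \<in> S \<Longrightarrow> cinf U (f i)) \<Longrightarrow> cinf U (\<lambda>x. \<Sum>i\<in>S. f i x)"
  using pc_cinf[of U "\<lambda>x. \<Sum>i\<in>S. f i x"] pc_sum[of S U f] pc.base[of U] by blast

section \<open>Fields\<close>

lemma vf_diff: "smooth_vf U X \<Longrightarrow> q \<in> U \<Longrightarrow> X differentiable (at q)"
  unfolding smooth_vf_def diff_vec using cinf_diff by blast

lemma vf_comp_diff: "smooth_vf U X \<Longrightarrow> q \<in> U \<Longrightarrow> (\<lambda>x. X x $ i) differentiable (at q)"
  unfolding smooth_vf_def using cinf_diff by blast

lemma mf_diff: "smooth_mf U A \<Longrightarrow> q \<in> U \<Longrightarrow> A differentiable (at q)"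
  unfolding smooth_mf_def diff_vec using cinf_diff by blast

lemma mf_comp_diff: "smooth_mf U A \<Longrightarrow> q \<in> U \<Longrightarrow> (\<lambda>x. A x $ i $ j) differentiable (at q)"
  unfolding smooth_mf_def using cinf_diff by blast

lemma app_smooth: "open U \<Longrightarrow> smooth_mf U J \<Longrightarrow> smooth_vf U X \<Longrightarrow> smooth_vf U (app J X)"
  unfolding smooth_vf_def smooth_mf_def app_def matrix_vector_mult_def
proof (intro allI)
  fix i
  assume U: "open U" and J: "\<forall>i j. cinf U (\<lambda>x. J x $ i $ j)" and X: "\<forall>i. cinf U (\<lambda>x. X x $ i)"
  show "cinf U (\<lambda>x. (\<chi> i. \<Sum>j\<in>UNIV. J x $ i $ j * X x $ j) $ i)"
    using cinf_sum[OF U, of UNIV "\<lambda>j x. J x $ i $ j * X x $ j"] cinf_mult[OF U] J X by simp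
qed

lemma const_smooth: "open U \<Longrightarrow> smooth_vf U (\<lambda>x. v)"
  unfolding smooth_vf_def by (auto intro!: cinf_const)

lemma mdiff_comp:
  fixes A :: "'a::real_normed_vector \<Rightarrow> real^'n^'m"
  shows "A differentiable (at p) \<Longrightarrow> (\<lambda>x. A x $ i $ j) differentiable (at p)"
  unfolding diff_vec by blast

lemma vdiff_comp:
  fixes A :: "'a::real_normed_vector \<Rightarrow> real^'n"
  shows "A differentiable (at p) \<Longrightarrow> (\<lambda>x. A x $ i) differentiable (at p)"
  unfolding diff_vec by blast

lemma fd_mat:
  fixes A :: "'a::real_normed_vector \<Rightarrow> real^'n^'m"
  assumes "A differentiable (at p)"
  shows "frechet_derivative A (at p) h $ i $ j = frechet_derivative (\<lambda>x. A x $ i $ j) (at p) h"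
proof -
  have "(\<lambda>x. A x $ i) differentiable (at p)" using assms diff_vec by blast
  then show ?thesis using fd_vec[OF assms] fd_vec by metis
qed

lemma app_diff:
  fixes J :: "'a::real_normed_vector \<Rightarrow> real^'n^'m"
  assumes "J differentiable (at p)" "W differentiable (at p)"
  shows "(\<lambda>x. J x *v W x) differentiable (at p)"
  unfolding diff_vec matrix_vector_mult_def
proof
  fix i
  show "(\<lambda>x. (\<chi> i. \<Sum>j\<in>UNIV. J x $ i $ j * W x $ j) $ i) differentiable (at p)"
    using assms by (simp add: mdiff_comp vdiff_comp)
qed

lemma fd_app:
  fixes J :: "'a::real_normed_vector \<Rightarrow> real^'n^'m"
  assumes J: "J differentiable (at p)" and W: "W differentiable (at p)"
  shows "frechet_derivative (\<lambda>x. J x *v W x) (at p) v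
      = frechet_derivative J (at p) v *v W p + J p *v frechet_derivative W (at p) v"
proof -
  have "frechet_derivative (\<lambda>x. J x *v W x) (at p) v $ i
      = (frechet_derivative J (at p) v *v W p + J p *v frechet_derivative W (at p) v) $ i" for i
  proof -
    have "frechet_derivative (\<lambda>x. J x *v W x) (at p) v $ i
        = frechet_derivative (\<lambda>x. \<Sum>j\<in>UNIV. J x $ i $ j * W x $ j) (at p) v"
      using fd_vec[OF app_diff[OF J W]] by (simp add: matrix_vector_mult_def)
    also have "\<dots> = (\<Sum>j\<in>UNIV. frechet_derivative (\<lambda>x. J x $ i $ j) (at p) v * W p $ j
                     + J p $ i $ j * frechet_derivative (\<lambda>x. W x $ j) (at p) v)"
    proof -
      have "frechet_derivative (\<lambda>x. \<Sum>j\<in>UNIV. J x $ i $ j * W x $ j) (at p) v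
          = (\<Sum>j\<in>UNIV. frechet_derivative (\<lambda>x. J x $ i $ j * W x $ j) (at p) v)"
        by (rule fd_sum) (auto intro!: differentiable_mult mdiff_comp[OF J] vdiff_comp[OF W])
      also have "\<dots> = (\<Sum>j\<in>UNIV. frechet_derivative (\<lambda>x. J x $ i $ j) (at p) v * W p $ j
                     + J p $ i $ j * frechet_derivative (\<lambda>x. W x $ j) (at p) v)"
        by (rule sum.cong[OF refl], rule fd_mult) (auto intro!: mdiff_comp[OF J] vdiff_comp[OF W])
      finally show ?thesis .
    qed
    also have "\<dots> = (frechet_derivative J (at p) v *v W p + J p *v frechet_derivative W (at p) v) $ i"
      by (simp add: matrix_vector_mult_def fd_mat[OF J] fd_vec[OF W] sum.distrib)
    finally show ?thesis .
  qed
  then show ?thesis by (simp add: vec_eq_iff)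
qed



lemma mmult_diff:
  fixes A :: "'a::real_normed_vector \<Rightarrow> real^'n^'m" and B :: "'a \<Rightarrow> real^'k^'n"
  assumes "A differentiable (at p)" "B differentiable (at p)"
  shows "(\<lambda>x. A x ** B x) differentiable (at p)"
  unfolding diff_vec matrix_matrix_mult_def
  using assms by (simp add: mdiff_comp)

lemma fd_mmult:
  fixes A :: "'a::real_normed_vector \<Rightarrow> real^'n^'m" and B :: "'a \<Rightarrow> real^'k^'n"
  assumes A: "A differentiable (at p)" and B: "B differentiable (at p)"
  shows "frechet_derivative (\<lambda>x. A x ** B x) (at p) v
      = frechet_derivative A (at p) v ** B p + A p ** frechet_derivative B (at p) v"
proof -
  have "frechet_derivative (\<lambda>x. A x ** B x) (at p) v $ i $ k
      = (frechet_derivative A (at p) v ** B p + A p ** frechet_derivative B (at p) v) $ i $ k" for i k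
  proof -
    have "frechet_derivative (\<lambda>x. A x ** B x) (at p) v $ i $ k
        = frechet_derivative (\<lambda>x. \<Sum>j\<in>UNIV. A x $ i $ j * B x $ j $ k) (at p) v"
      using fd_mat[OF mmult_diff[OF A B]] by (simp add: matrix_matrix_mult_def)
    also have "\<dots> = (\<Sum>j\<in>UNIV. frechet_derivative (\<lambda>x. A x $ i $ j) (at p) v * B p $ j $ k
                     + A p $ i $ j * frechet_derivative (\<lambda>x. B x $ j $ k) (at p) v)"
    proof -
      have "frechet_derivative (\<lambda>x. \<Sum>j\<in>UNIV. A x $ i $ j * B x $ j $ k) (at p) v
          = (\<Sum>j\<in>UNIV. frechet_derivative (\<lambda>x. A x $ i $ j * B x $ j $ k) (at p) v)"
        by (rule fd_sum) (auto intro!: differentiable_mult mdiff_comp[OF A] mdiff_comp[OF B])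
      also have "\<dots> = (\<Sum>j\<in>UNIV. frechet_derivative (\<lambda>x. A x $ i $ j) (at p) v * B p $ j $ k
                     + A p $ i $ j * frechet_derivative (\<lambda>x. B x $ j $ k) (at p) v)"
        by (rule sum.cong[OF refl], rule fd_mult) (auto intro!: mdiff_comp[OF A] mdiff_comp[OF B])
      finally show ?thesis .
    qed
    also have "\<dots> = (frechet_derivative A (at p) v ** B p + A p ** frechet_derivative B (at p) v) $ i $ k"
      by (simp add: matrix_matrix_mult_def fd_mat[OF A] fd_mat[OF B] sum.distrib)
    finally show ?thesis .
  qed
  then show ?thesis by (simp add: vec_eq_iff)
qed

lemma det_diff:
  fixes M :: "'a::real_normed_vector \<Rightarrow> real^'n^'n"
  assumes "\<And>i j. (\<lambda>x. M x $ i $ j) differentiable (at p)"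
  shows "(\<lambda>x. det (M x)) differentiable (at p)"
  unfolding det_def
proof (rule differentiable_sum)
  show "finite {p. p permutes (UNIV::'n set)}" by (simp add: finite_permutations)
  show "\<forall>a\<in>{p. p permutes UNIV}. (\<lambda>x. of_int (sign a) * (\<Prod>i\<in>UNIV. M x $ i $ a i)) differentiable (at p)"
  proof
    fix a :: "'n \<Rightarrow> 'n"
    have "(\<lambda>x. \<Prod>i\<in>UNIV. M x $ i $ a i) differentiable (at p)"
      by (rule differentiable_prod') (auto intro: assms)
    then show "(\<lambda>x. of_int (sign a) * (\<Prod>i\<in>UNIV. M x $ i $ a i)) differentiable (at p)"
      by (intro differentiable_mult differentiable_const)
  qed
qed

lemma bil_diff:
  fixes M :: "'a::real_normed_vector \<Rightarrow> real^'n^'n"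
  assumes "M differentiable (at p)" "a differentiable (at p)" "b differentiable (at p)"
  shows "(\<lambda>x. bil (M x) (a x) (b x)) differentiable (at p)"
proof -
  have "(\<lambda>x. M x *v b x) differentiable (at p)" using app_diff assms by blast
  then have "(\<lambda>x. \<Sum>i\<in>UNIV. a x $ i * (M x *v b x) $ i) differentiable (at p)"
    by (intro differentiable_sum ballI differentiable_mult vdiff_comp assms) simp_all
  then show ?thesis
    unfolding bil_def inner_vec_def by simp
qed

lemma minv_ex:
  fixes A :: "real^'n^'n"
  assumes "invertible A"
  shows "A ** matrix_inv A = mat 1 \<and> matrix_inv A ** A = mat 1"
  using assms unfolding invertible_def matrix_inv_def by (rule someI_ex)

lemma minv_cramer:
  fixes A :: "real^'n^'n"
  assumes "invertible A"
  shows "matrix_inv A *v w = (\<chi> k. det(\<chi> i j. if j=k then w$i else A$i$j) / det A)"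
proof -
  have "det A \<noteq> 0" using assms invertible_det_nz by blast
  moreover have "A *v (matrix_inv A *v w) = w"
    using minv_ex[OF assms] by (simp add: matrix_vector_mul_assoc)
  ultimately show ?thesis using cramer by blast
qed

lemma minv_diff:
  fixes M :: "real^'m::finite \<Rightarrow> real^'n^'n"
  assumes U: "open U" "p \<in> U" and inv: "\<And>q. q \<in> U \<Longrightarrow> invertible (M q)"
    and M: "M differentiable (at p)" and w: "w differentiable (at p)"
  shows "(\<lambda>q. matrix_inv (M q) *v w q) differentiable (at p)"
proof (rule diff_local[OF U, of "\<lambda>q. (\<chi> k. det(\<chi> i j. if j=k then w q$i else M q$i$j) / det (M q))"])
  fix q assume "q \<in> U"
  then show "(\<chi> k. det(\<chi> i j. if j=k then w q$i else M q$i$j) / det (M q)) = matrix_inv (M q) *v w q"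
    using minv_cramer[OF inv[OF \<open>q \<in> U\<close>], of "w q"] by simp
next
  have d0: "det (M p) \<noteq> 0" using inv[OF U(2)] invertible_det_nz by blast
  show "(\<lambda>q. (\<chi> k. det(\<chi> i j. if j=k then w q$i else M q$i$j) / det (M q))) differentiable (at p)"
    unfolding diff_vec
  proof
    fix k
    have 1: "(\<lambda>x. det (\<chi> i j. if j = k then w x $ i else M x $ i $ j)) differentiable (at p)"
    proof (rule det_diff)
      fix i j
      show "(\<lambda>x. (\<chi> i j. if j = k then w x $ i else M x $ i $ j) $ i $ j) differentiable (at p)"
        using vdiff_comp[OF w, of i] mdiff_comp[OF M, of i j] by (cases "j = k") simp_all
    qed
    have 2: "(\<lambda>x. det (M x)) differentiable (at p)"
      by (rule det_diff, rule mdiff_comp[OF M])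
    have "(\<lambda>x. det (\<chi> i j. if j = k then w x $ i else M x $ i $ j) / det (M x)) differentiable (at p)"
      using differentiable_divide[OF 1 2 d0] .
    then show "(\<lambda>x. (\<chi> k. det (\<chi> i j. if j = k then w x $ i else M x $ i $ j) / det (M x)) $ k) differentiable (at p)"
      by simp
  qed
qed

section \<open>Bilinear forms\<close>

lemma bil_expand: "bil A u v = (\<Sum>j\<in>UNIV. \<Sum>k\<in>UNIV. u$j * A$j$k * v$k)"
  by (simp add: bil_def inner_vec_def matrix_vector_mult_def sum_distrib_left mult.assoc)

lemma bil_add1: "bil A (u + u') v = bil A u v + bil A u' v"
  by (simp add: bil_def inner_add_left)
lemma bil_add2: "bil A u (v + v') = bil A u v + bil A u v'"
  by (simp add: bil_def inner_add_right matrix_vector_right_distrib)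
lemma bil_addM: "bil (A + B) u v = bil A u v + bil B u v"
  by (simp add: bil_def inner_add_right matrix_vector_mult_add_rdistrib)
lemma bil_diff1: "bil A (u - u') v = bil A u v - bil A u' v"
  by (simp add: bil_def inner_diff_left)
lemma bil_diff2: "bil A u (v - v') = bil A u v - bil A u v'"
  by (simp add: bil_def inner_diff_right matrix_vector_mult_diff_distrib)
lemma bil_diffM: "bil (A - B) u v = bil A u v - bil B u v"
  by (simp add: bil_def inner_diff_right matrix_vector_mult_diff_rdistrib)
lemma bil_neg1: "bil A (- u) v = - bil A u v"
  by (simp add: bil_def)
lemma bil_neg2: "bil A u (- v) = - bil A u v"
  by (simp add: bil_expand sum_negf)
lemma bil_negM: "bil (- A) u v = - bil A u v"
  by (simp add: bil_expand sum_negf)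
lemma bil_scale1: "bil A (c *\<^sub>R u) v = c * bil A u v"
  by (simp add: bil_def)
lemma bil_scale2: "bil A u (c *\<^sub>R v) = c * bil A u v"
  by (simp add: bil_def matrix_vector_mult_scaleR)
lemma bil_scaleM: "bil (c *\<^sub>R A) u v = c * bil A u v"
  by (simp add: bil_expand sum_distrib_left mult.assoc mult.left_commute)
lemma bil_zero1: "bil A 0 v = 0" by (simp add: bil_def)
lemma bil_zero2: "bil A u 0 = 0" by (simp add: bil_def)
lemma bil_zeroM: "bil 0 u v = 0" by (simp add: bil_def)

lemmas bil_lin = bil_add1 bil_add2 bil_addM bil_diff1 bil_diff2 bil_diffM bil_neg1 bil_neg2 bil_negM
  bil_scale1 bil_scale2 bil_scaleM bil_zero1 bil_zero2 bil_zeroM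

lemma bil_transpose: "bil A u v = bil (transpose A) v u"
proof -
  have "bil A u v = (u v* A) \<bullet> v" by (simp add: bil_def dot_lmul_matrix)
  also have "\<dots> = (transpose A *v u) \<bullet> v" by simp
  also have "\<dots> = bil (transpose A) v u" by (simp add: bil_def inner_commute)
  finally show ?thesis .
qed

lemma bil_mmult: "bil (A ** B) u v = bil A u (B *v v)"
  by (simp add: bil_def matrix_vector_mul_assoc)

lemma sum_delta_mult: "(\<Sum>l\<in>UNIV. f l * (if l = k then 1 else 0)) = (f (k::'n::finite) :: real)"
  by (simp only: if_distrib mult_1_right mult_zero_right) simp

lemma bil_axis3: "bil A u (axis k 1) = (\<Sum>j\<in>UNIV. u$j * A$j$k)"
  by (simp add: bil_def matrix_vector_mult_def axis_def inner_vec_def sum_delta_mult)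

lemma bil_axis: "bil A (axis j 1) (axis k 1) = A $ j $ k"
  unfolding bil_axis3 by (simp add: axis_def mult.commute[of "if _ then _ else _"] sum_delta_mult)

lemma neg_mat_vec: "(- A) *v v = - (A *v (v::real^'n))"
  by (simp add: matrix_vector_mult_def vec_eq_iff sum_negf)

lemma mat_neg_mult: "A ** (- B) = - (A ** (B::real^'n^'m))"
  by (simp add: matrix_matrix_mult_def vec_eq_iff sum_negf)

lemma mat_neg_mult2: "(- A) ** B = - (A ** (B::real^'n^'m))"
  by (simp add: matrix_matrix_mult_def vec_eq_iff sum_negf)

lemma mat_vec_neg: "A *v (- v) = - (A *v (v::real^'n))"
  by (simp add: matrix_vector_mult_def vec_eq_iff sum_negf)

lemma fd_neg:
  assumes "f differentiable (at p)"
  shows "frechet_derivative (\<lambda>x. - f x) (at p) h = - frechet_derivative f (at p) h"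
proof -
  have "((\<lambda>x. - f x) has_derivative (\<lambda>h. - frechet_derivative f (at p) h)) (at p)"
    using assms by (intro has_derivative_minus) (auto simp: frechet_derivative_works)
  from frechet_derivative_at[OF this] show ?thesis by metis
qed

section \<open>The almost Kaehler structure\<close>

locale AK =
  fixes U :: "(real^'n::finite) set" and g J \<kappa> :: "real^'n \<Rightarrow> real^'n^'n"
  assumes ak: "almost_kahler U g J \<kappa>"
begin

lemma U: "open U" using ak unfolding almost_kahler_def by blast
lemma gs: "smooth_mf U g" using ak unfolding almost_kahler_def by blast
lemma Js: "smooth_mf U J" using ak unfolding almost_kahler_def by blast
lemma ks: "smooth_mf U \<kappa>" using ak unfolding almost_kahler_def by blast
lemma JJ: "p \<in> U \<Longrightarrow> J p ** J p = - mat 1" using ak unfolding almost_kahler_def by blast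
lemma ksk: "p \<in> U \<Longrightarrow> transpose (\<kappa> p) = - \<kappa> p" using ak unfolding almost_kahler_def by blast
lemma kinv: "p \<in> U \<Longrightarrow> invertible (\<kappa> p)" using ak unfolding almost_kahler_def by blast
lemma closed: "p \<in> U \<Longrightarrow>
        frechet_derivative \<kappa> (at p) (axis i 1) $ j $ k
      + frechet_derivative \<kappa> (at p) (axis j 1) $ k $ i
      + frechet_derivative \<kappa> (at p) (axis k 1) $ i $ j = 0" using ak unfolding almost_kahler_def by blast
lemma gk: "p \<in> U \<Longrightarrow> g p = \<kappa> p ** J p" using ak unfolding almost_kahler_def by blast
lemma gsym: "p \<in> U \<Longrightarrow> transpose (g p) = g p" using ak unfolding almost_kahler_def by blast
lemma gpos: "p \<in> U \<Longrightarrow> v \<noteq> 0 \<Longrightarrow> bil (g p) v v > 0" using ak unfolding almost_kahler_def by blast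
lemma JgJ: "p \<in> U \<Longrightarrow> transpose (J p) ** g p ** J p = g p" using ak unfolding almost_kahler_def by blast

lemma gd: "p \<in> U \<Longrightarrow> g differentiable (at p)" using gs mf_diff by blast
lemma Jd: "p \<in> U \<Longrightarrow> J differentiable (at p)" using Js mf_diff by blast
lemma kd: "p \<in> U \<Longrightarrow> \<kappa> differentiable (at p)" using ks mf_diff by blast

lemma JJv: "p \<in> U \<Longrightarrow> J p *v (J p *v v) = - v"
  by (simp add: matrix_vector_mul_assoc JJ neg_mat_vec)

lemma Jinv: "p \<in> U \<Longrightarrow> invertible (J p)"
  unfolding invertible_def
  by (rule exI[of _ "- J p"]) (simp add: mat_neg_mult mat_neg_mult2 JJ)

lemma ginv: "p \<in> U \<Longrightarrow> invertible (g p)"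
  using gk kinv Jinv invertible_mult by metis

lemma gsymb: "p \<in> U \<Longrightarrow> bil (g p) u v = bil (g p) v u"
  using bil_transpose gsym by metis

lemma JG1: "p \<in> U \<Longrightarrow> bil (g p) (J p *v a) (J p *v b) = bil (g p) a b"
proof -
  assume p: "p \<in> U"
  have "bil (g p) a b = bil (transpose (J p) ** g p ** J p) a b" using JgJ[OF p] by simp
  also have "\<dots> = bil (transpose (J p)) a (g p *v (J p *v b))" by (simp add: bil_mmult)
  also have "\<dots> = bil (J p) (g p *v (J p *v b)) a" by (metis bil_transpose transpose_transpose)
  also have "\<dots> = bil (g p) (J p *v a) (J p *v b)" by (simp add: bil_def inner_commute)
  finally show ?thesis by simp
qed

lemma JG2: "p \<in> U \<Longrightarrow> bil (g p) (J p *v a) b = - bil (g p) a (J p *v b)"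
proof -
  assume p: "p \<in> U"
  have "bil (g p) (J p *v a) b = bil (g p) (J p *v a) (J p *v (J p *v (- b)))"
    by (simp add: JJv[OF p])
  also have "\<dots> = bil (g p) a (J p *v (- b))" by (rule JG1[OF p])
  finally show ?thesis by (simp add: mat_vec_neg bil_neg2)
qed

lemma gpos0: "p \<in> U \<Longrightarrow> bil (g p) v v = 0 \<Longrightarrow> v = 0"
  using gpos by force

lemma gnondeg: "p \<in> U \<Longrightarrow> (\<And>v. bil (g p) w v = 0) \<Longrightarrow> w = 0"
  using gpos0 by blast

lemma dlin_g: "p \<in> U \<Longrightarrow> linear (frechet_derivative g (at p))" using gd fd_linear by blast
lemma dlin_J: "p \<in> U \<Longrightarrow> linear (frechet_derivative J (at p))" using Jd fd_linear by blast
lemma dlin_k: "p \<in> U \<Longrightarrow> linear (frechet_derivative \<kappa> (at p))" using kd fd_linear by blast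

lemma dg_sym: "p \<in> U \<Longrightarrow> transpose (frechet_derivative g (at p) x) = frechet_derivative g (at p) x"
proof -
  assume p: "p \<in> U"
  have e: "frechet_derivative (\<lambda>q. g q $ j $ i) (at p) = frechet_derivative (\<lambda>q. g q $ i $ j) (at p)" for i j
  proof (rule fd_local[OF U p])
    fix q assume "q \<in> U"
    then have "transpose (g q) $ i $ j = g q $ i $ j" using gsym by simp
    then show "g q $ j $ i = g q $ i $ j" by (simp add: transpose_def)
  qed
  have "transpose (frechet_derivative g (at p) x) $ i $ j = frechet_derivative g (at p) x $ i $ j" for i j
    unfolding transpose_def using fd_mat[OF gd[OF p], of x j i] fd_mat[OF gd[OF p], of x i j] e[of i j]
    by simp
  then show ?thesis by (simp add: vec_eq_iff)
qed

lemma dk_skew: "p \<in> U \<Longrightarrow> transpose (frechet_derivative \<kappa> (at p) x) = - frechet_derivative \<kappa> (at p) x"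
proof -
  assume p: "p \<in> U"
  have e: "frechet_derivative (\<lambda>q. \<kappa> q $ j $ i) (at p) = frechet_derivative (\<lambda>q. - \<kappa> q $ i $ j) (at p)" for i j
  proof (rule fd_local[OF U p])
    fix q assume "q \<in> U"
    then have "transpose (\<kappa> q) $ i $ j = - \<kappa> q $ i $ j" using ksk by simp
    then show "\<kappa> q $ j $ i = - \<kappa> q $ i $ j" by (simp add: transpose_def)
  qed
  have "transpose (frechet_derivative \<kappa> (at p) x) $ i $ j = - frechet_derivative \<kappa> (at p) x $ i $ j" for i j
  proof -
    have "transpose (frechet_derivative \<kappa> (at p) x) $ i $ j = frechet_derivative \<kappa> (at p) x $ j $ i"
      by (simp add: transpose_def)
    also have "\<dots> = frechet_derivative (\<lambda>q. \<kappa> q $ j $ i) (at p) x" by (rule fd_mat[OF kd[OF p]])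
    also have "\<dots> = frechet_derivative (\<lambda>q. - \<kappa> q $ i $ j) (at p) x" by (simp only: e)
    also have "\<dots> = - frechet_derivative (\<lambda>q. \<kappa> q $ i $ j) (at p) x"
      by (rule fd_neg[OF mf_comp_diff[OF ks p]])
    also have "\<dots> = - frechet_derivative \<kappa> (at p) x $ i $ j" by (simp only: fd_mat[OF kd[OF p]])
    finally show ?thesis .
  qed
  then show ?thesis by (simp add: vec_eq_iff)
qed

lemma dJ_anti: "p \<in> U \<Longrightarrow> frechet_derivative J (at p) x ** J p + J p ** frechet_derivative J (at p) x = 0"
proof -
  assume p: "p \<in> U"
  have "frechet_derivative (\<lambda>q. J q ** J q) (at p) = frechet_derivative (\<lambda>q. - mat 1) (at p)"
    by (rule fd_local[OF U p]) (simp add: JJ)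
  then have "frechet_derivative (\<lambda>q. J q ** J q) (at p) x = 0" by (simp add: fd_const)
  then show ?thesis by (simp add: fd_mmult[OF Jd[OF p] Jd[OF p]])
qed

lemma kgJ: "p \<in> U \<Longrightarrow> \<kappa> p = - (g p ** J p)"
proof -
  assume p: "p \<in> U"
  have "g p ** J p = \<kappa> p ** (J p ** J p)" by (simp add: gk[OF p] matrix_mul_assoc)
  also have "\<dots> = - \<kappa> p" by (simp add: JJ[OF p] mat_neg_mult)
  finally show ?thesis by simp
qed

lemma dk_eq: "p \<in> U \<Longrightarrow> frechet_derivative \<kappa> (at p) x
    = - (frechet_derivative g (at p) x ** J p + g p ** frechet_derivative J (at p) x)"
proof -
  assume p: "p \<in> U"
  have "frechet_derivative \<kappa> (at p) = frechet_derivative (\<lambda>q. - (g q ** J q)) (at p)"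
    by (rule fd_local[OF U p]) (simp add: kgJ)
  then show ?thesis
    by (simp add: fd_neg mmult_diff gd[OF p] Jd[OF p] fd_mmult)
qed

lemma bil_sum: "bil (sum f S) u v = (\<Sum>i\<in>S. bil (f i) u v)"
proof (cases "finite S")
  case True
  then show ?thesis by (induction S rule: finite_induct) (simp_all add: bil_zeroM bil_addM)
qed (simp add: bil_zeroM)

lemma tri_expand:
  assumes L: "linear L"
  shows "bil (L x) u v = (\<Sum>i\<in>UNIV. \<Sum>j\<in>UNIV. \<Sum>k\<in>UNIV. x$i * u$j * v$k * L (axis i 1) $ j $ k)"
proof -
  have "L x = L (\<Sum>i\<in>UNIV. x$i *\<^sub>R axis i 1)"
    using basis_expansion[of x] by (simp add: scalar_mult_eq_scaleR)
  also have "\<dots> = (\<Sum>i\<in>UNIV. x$i *\<^sub>R L (axis i 1))"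
    using L by (simp add: linear_sum linear_scale)
  finally have "bil (L x) u v = (\<Sum>i\<in>UNIV. x$i * bil (L (axis i 1)) u v)"
    by (simp add: bil_sum bil_scaleM)
  then show ?thesis
    by (simp add: bil_expand sum_distrib_left ac_simps)
qed

lemma closed_gen:
  assumes p: "p \<in> U"
  shows "bil (frechet_derivative \<kappa> (at p) x) u v + bil (frechet_derivative \<kappa> (at p) u) v x
       + bil (frechet_derivative \<kappa> (at p) v) x u = 0"
proof -
  define c where "c i j k = frechet_derivative \<kappa> (at p) (axis i 1) $ j $ k" for i j k
  have L: "linear (frechet_derivative \<kappa> (at p))" using dlin_k[OF p] .
  have S1: "bil (frechet_derivative \<kappa> (at p) x) u v
      = (\<Sum>a\<in>UNIV. \<Sum>b\<in>UNIV. \<Sum>d\<in>UNIV. x$a * u$b * v$d * c a b d)"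
    unfolding tri_expand[OF L] c_def ..
  have "bil (frechet_derivative \<kappa> (at p) u) v x
      = (\<Sum>b\<in>UNIV. \<Sum>d\<in>UNIV. \<Sum>a\<in>UNIV. u$b * v$d * x$a * c b d a)"
    unfolding tri_expand[OF L] c_def ..
  also have "\<dots> = (\<Sum>b\<in>UNIV. \<Sum>a\<in>UNIV. \<Sum>d\<in>UNIV. u$b * v$d * x$a * c b d a)"
    by (rule sum.cong[OF refl], rule sum.swap)
  also have "\<dots> = (\<Sum>a\<in>UNIV. \<Sum>b\<in>UNIV. \<Sum>d\<in>UNIV. u$b * v$d * x$a * c b d a)"
    by (rule sum.swap)
  finally have S2: "bil (frechet_derivative \<kappa> (at p) u) v x
      = (\<Sum>a\<in>UNIV. \<Sum>b\<in>UNIV. \<Sum>d\<in>UNIV. x$a * u$b * v$d * c b d a)"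
    by (simp add: mult.commute mult.left_commute)
  have "bil (frechet_derivative \<kappa> (at p) v) x u
      = (\<Sum>d\<in>UNIV. \<Sum>a\<in>UNIV. \<Sum>b\<in>UNIV. v$d * x$a * u$b * c d a b)"
    unfolding tri_expand[OF L] c_def ..
  also have "\<dots> = (\<Sum>a\<in>UNIV. \<Sum>d\<in>UNIV. \<Sum>b\<in>UNIV. v$d * x$a * u$b * c d a b)"
    by (rule sum.swap)
  also have "\<dots> = (\<Sum>a\<in>UNIV. \<Sum>b\<in>UNIV. \<Sum>d\<in>UNIV. v$d * x$a * u$b * c d a b)"
    by (rule sum.cong[OF refl], rule sum.swap)
  finally have S3: "bil (frechet_derivative \<kappa> (at p) v) x u
      = (\<Sum>a\<in>UNIV. \<Sum>b\<in>UNIV. \<Sum>d\<in>UNIV. x$a * u$b * v$d * c d a b)"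
    by (simp add: mult.commute mult.left_commute)
  have cl: "c a b d + c b d a + c d a b = 0" for a b d
    unfolding c_def using closed[OF p] by blast
  have "(\<Sum>a\<in>UNIV. \<Sum>b\<in>UNIV. \<Sum>d\<in>UNIV. x$a * u$b * v$d * c a b d)
      + (\<Sum>a\<in>UNIV. \<Sum>b\<in>UNIV. \<Sum>d\<in>UNIV. x$a * u$b * v$d * c b d a)
      + (\<Sum>a\<in>UNIV. \<Sum>b\<in>UNIV. \<Sum>d\<in>UNIV. x$a * u$b * v$d * c d a b)
      = (\<Sum>a\<in>UNIV. \<Sum>b\<in>UNIV. \<Sum>d\<in>UNIV. x$a * u$b * v$d * (c a b d + c b d a + c d a b))"
    by (simp add: sum.distrib distrib_left)
  also have "\<dots> = 0" by (simp add: cl)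
  finally show ?thesis using S1 S2 S3 by simp
qed

end

lemma bil_basis3: "bil M a b = (\<Sum>l\<in>UNIV. b$l * bil M a (axis l 1))"
proof -
  have "bil M a b = (\<Sum>j\<in>UNIV. \<Sum>l\<in>UNIV. b$l * (a$j * M$j$l))"
    by (simp add: bil_expand ac_simps)
  also have "\<dots> = (\<Sum>l\<in>UNIV. \<Sum>j\<in>UNIV. b$l * (a$j * M$j$l))" by (rule sum.swap)
  also have "\<dots> = (\<Sum>l\<in>UNIV. b$l * bil M a (axis l 1))"
    by (simp add: bil_axis3 sum_distrib_left)
  finally show ?thesis .
qed

context AK
begin

lemma bil_lin_basis: "linear L \<Longrightarrow> bil (L b) x a = (\<Sum>l\<in>UNIV. b$l * bil (L (axis l 1)) x a)"
proof -
  assume L: "linear L"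
  have "L b = L (\<Sum>i\<in>UNIV. b$i *\<^sub>R axis i 1)"
    using basis_expansion[of b] by (simp add: scalar_mult_eq_scaleR)
  also have "\<dots> = (\<Sum>i\<in>UNIV. b$i *\<^sub>R L (axis i 1))"
    using L by (simp add: linear_sum linear_scale)
  finally show ?thesis by (simp add: bil_sum bil_scaleM)
qed


definition wv :: "real^'n \<Rightarrow> real^'n \<Rightarrow> real^'n \<Rightarrow> real^'n" where
  "wv p u v = (\<chi> l.
      (bil (frechet_derivative g (at p) u) v (axis l 1)
     + bil (frechet_derivative g (at p) v) u (axis l 1)
     - bil (frechet_derivative g (at p) (axis l 1)) u v) / 2)"

lemma chr_wv: "christoffel g p u v = matrix_inv (g p) *v wv p u v"
  by (simp add: christoffel_def wv_def)

lemma g_chr: "p \<in> U \<Longrightarrow> g p *v christoffel g p u v = wv p u v"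
  using minv_ex[OF ginv] by (simp add: chr_wv matrix_vector_mul_assoc)

lemma chr_sym: "p \<in> U \<Longrightarrow> christoffel g p u v = christoffel g p v u"
proof -
  assume p: "p \<in> U"
  have "bil (frechet_derivative g (at p) e) u v = bil (frechet_derivative g (at p) e) v u" for e
    using bil_transpose dg_sym[OF p] by metis
  then have "wv p u v = wv p v u" by (simp add: wv_def add.commute)
  then show ?thesis by (simp add: chr_wv)
qed

lemma wv_add2: "p \<in> U \<Longrightarrow> wv p u (a + b) = wv p u a + wv p u b"
  using dlin_g[of p]
  by (simp add: wv_def vec_eq_iff linear_add bil_lin add_divide_distrib diff_divide_distrib)

lemma wv_scale2: "p \<in> U \<Longrightarrow> wv p u (c *\<^sub>R a) = c *\<^sub>R wv p u a"
  using dlin_g[of p]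
  by (simp add: wv_def vec_eq_iff linear_scale bil_lin algebra_simps)

lemma chr_add2: "p \<in> U \<Longrightarrow> christoffel g p u (a + b) = christoffel g p u a + christoffel g p u b"
  by (simp add: chr_wv wv_add2 matrix_vector_right_distrib)

lemma chr_scale2: "p \<in> U \<Longrightarrow> christoffel g p u (c *\<^sub>R a) = c *\<^sub>R christoffel g p u a"
  by (simp add: chr_wv wv_scale2 matrix_vector_mult_scaleR)

lemma chr_neg2: "p \<in> U \<Longrightarrow> christoffel g p u (- a) = - christoffel g p u a"
  using chr_scale2[of p u "-1" a] by simp

lemma chr_diff2: "p \<in> U \<Longrightarrow> christoffel g p u (a - b) = christoffel g p u a - christoffel g p u b"
  using chr_add2[of p u a "- b"] chr_neg2[of p u b] by simp

lemma metric_compat: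
  assumes p: "p \<in> U"
  shows "bil (frechet_derivative g (at p) x) a b
       = bil (g p) (christoffel g p x a) b + bil (g p) a (christoffel g p x b)"
proof -
  let ?d = "frechet_derivative g (at p)"
  have L: "linear ?d" using dlin_g[OF p] .
  have sy: "bil (?d y) s t = bil (?d y) t s" for y s t
    using bil_transpose dg_sym[OF p] by metis
  have one: "bil (g p) (christoffel g p x a) b
        = (bil (?d x) a b + bil (?d a) x b - bil (?d b) x a) / 2" for x a b
  proof -
    have "bil (g p) (christoffel g p x a) b = bil (g p) b (christoffel g p x a)"
      using gsymb[OF p] by simp
    also have "\<dots> = b \<bullet> wv p x a" by (simp add: bil_def g_chr[OF p])
    also have "\<dots> = (\<Sum>l\<in>UNIV. b$l * bil (?d x) a (axis l 1)
                     + b$l * bil (?d a) x (axis l 1) - b$l * bil (?d (axis l 1)) x a) / 2"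
      by (simp add: inner_vec_def wv_def sum_divide_distrib algebra_simps)
    also have "\<dots> = (bil (?d x) a b + bil (?d a) x b - bil (?d b) x a) / 2"
      by (simp add: sum.distrib sum_subtractf bil_basis3[of _ _ b] bil_lin_basis[OF L, of b])
    finally show ?thesis .
  qed
  have "bil (g p) a (christoffel g p x b) = bil (g p) (christoffel g p x b) a"
    using gsymb[OF p] by simp
  then show ?thesis
    unfolding one using sy[of x a b] sy[of a x b] sy[of b x a] by (simp add: field_simps)
qed

definition T :: "real^'n \<Rightarrow> real^'n \<Rightarrow> real^'n \<Rightarrow> real^'n" where
  "T p x w = frechet_derivative J (at p) x *v w + christoffel g p x (J p *v w) - J p *v christoffel g p x w"

lemma T_add: "p \<in> U \<Longrightarrow> T p x (a + b) = T p x a + T p x b"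
  by (simp add: T_def chr_add2 matrix_vector_right_distrib algebra_simps)

lemma T_scale: "p \<in> U \<Longrightarrow> T p x (c *\<^sub>R a) = c *\<^sub>R T p x a"
  by (simp add: T_def chr_scale2 matrix_vector_mult_scaleR algebra_simps)

lemma T_neg: "p \<in> U \<Longrightarrow> T p x (- a) = - T p x a"
  using T_scale[of p x "-1" a] by simp

lemma T_diff: "p \<in> U \<Longrightarrow> T p x (a - b) = T p x a - T p x b"
  using T_add[of p x a "- b"] T_neg[of p x b] by simp

lemma T_J: "p \<in> U \<Longrightarrow> T p x (J p *v w) = - (J p *v T p x w)"
proof -
  assume p: "p \<in> U"
  let ?d = "frechet_derivative J (at p) x" and ?G = "christoffel g p x"
  have a: "?d ** J p = - (J p ** ?d)" using dJ_anti[OF p, of x] by (simp add: eq_neg_iff_add_eq_0)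
  have 1: "T p x (J p *v w) = - ((J p ** ?d) *v w) - ?G w - J p *v ?G (J p *v w)"
  proof -
    have "T p x (J p *v w) = ?d *v (J p *v w) + ?G (J p *v (J p *v w)) - J p *v ?G (J p *v w)"
      by (simp add: T_def)
    also have "\<dots> = (?d ** J p) *v w + ?G (- w) - J p *v ?G (J p *v w)"
      by (simp only: JJv[OF p]) (simp add: matrix_vector_mul_assoc)
    also have "\<dots> = - ((J p ** ?d) *v w) - ?G w - J p *v ?G (J p *v w)"
      by (simp add: a neg_mat_vec chr_neg2[OF p])
    finally show ?thesis .
  qed
  have 2: "- (J p *v T p x w) = - ((J p ** ?d) *v w) - J p *v ?G (J p *v w) - ?G w"
  proof -
    have "J p *v T p x w = J p *v (?d *v w) + J p *v ?G (J p *v w) - J p *v (J p *v ?G w)"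
      by (simp add: T_def matrix_vector_right_distrib matrix_vector_mult_diff_distrib)
    also have "\<dots> = (J p ** ?d) *v w + J p *v ?G (J p *v w) + ?G w"
      by (simp only: JJv[OF p]) (simp add: matrix_vector_mul_assoc)
    finally show ?thesis by simp
  qed
  show ?thesis using 1 2 by simp
qed

definition K :: "real^'n \<Rightarrow> real^'n \<Rightarrow> real^'n \<Rightarrow> real^'n \<Rightarrow> real" where
  "K p x u v = bil (frechet_derivative \<kappa> (at p) x) u v - bil (\<kappa> p) (christoffel g p x u) v
     - bil (\<kappa> p) u (christoffel g p x v)"

lemma bil_skew: "transpose M = - M \<Longrightarrow> bil M u v = - bil M v u"
  using bil_transpose[of M u v] by (simp add: bil_negM)

lemma K_anti: "p \<in> U \<Longrightarrow> K p x u v = - K p x v u"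
proof -
  assume p: "p \<in> U"
  have 1: "bil (frechet_derivative \<kappa> (at p) x) u v = - bil (frechet_derivative \<kappa> (at p) x) v u"
    by (rule bil_skew[OF dk_skew[OF p]])
  have 2: "bil (\<kappa> p) a b = - bil (\<kappa> p) b a" for a b
    by (rule bil_skew[OF ksk[OF p]])
  show ?thesis unfolding K_def using 1 2[of "christoffel g p x u" v] 2[of u "christoffel g p x v"]
    by simp
qed

lemma K_cyc: "p \<in> U \<Longrightarrow> K p x u v + K p u v x + K p v x u = 0"
proof -
  assume p: "p \<in> U"
  have 2: "bil (\<kappa> p) a b = - bil (\<kappa> p) b a" for a b
    by (rule bil_skew[OF ksk[OF p]])
  have c: "bil (frechet_derivative \<kappa> (at p) x) u v + bil (frechet_derivative \<kappa> (at p) u) v x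
       + bil (frechet_derivative \<kappa> (at p) v) x u = 0" by (rule closed_gen[OF p])
  have e1: "bil (\<kappa> p) v (christoffel g p u x) = - bil (\<kappa> p) (christoffel g p x u) v"
    using 2 chr_sym[OF p, of x u] by metis
  have e2: "bil (\<kappa> p) (christoffel g p v x) u = - bil (\<kappa> p) u (christoffel g p x v)"
    using 2 chr_sym[OF p, of x v] by metis
  have e3: "bil (\<kappa> p) x (christoffel g p v u) = - bil (\<kappa> p) (christoffel g p u v) x"
    using 2 chr_sym[OF p, of u v] by metis
  show ?thesis unfolding K_def using c e1 e2 e3 by linarith
qed

lemma K_T: "p \<in> U \<Longrightarrow> K p x u v = - bil (g p) u (T p x v)"
proof -
  assume p: "p \<in> U"
  let ?dg = "frechet_derivative g (at p) x" and ?dJ = "frechet_derivative J (at p) x"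
  let ?G = "christoffel g p x"
  have "K p x u v = - bil ?dg u (J p *v v) - bil (g p) u (?dJ *v v)
        + bil (g p) (?G u) (J p *v v) + bil (g p) u (J p *v ?G v)"
    unfolding K_def dk_eq[OF p] kgJ[OF p]
    by (simp add: bil_lin bil_mmult)
  also have "\<dots> = - bil (g p) u (?G (J p *v v)) - bil (g p) u (?dJ *v v) + bil (g p) u (J p *v ?G v)"
    by (simp add: metric_compat[OF p])
  also have "\<dots> = - bil (g p) u (T p x v)"
    by (simp add: T_def bil_add2 bil_diff2)
  finally show ?thesis .
qed

definition A :: "real^'n \<Rightarrow> real^'n \<Rightarrow> real^'n \<Rightarrow> real^'n \<Rightarrow> real" where
  "A p x u v = bil (g p) (T p x u) v"

lemma A_K: "p \<in> U \<Longrightarrow> A p x u v = K p x u v"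
proof -
  assume p: "p \<in> U"
  have "A p x u v = bil (g p) v (T p x u)" unfolding A_def using gsymb[OF p] by simp
  also have "\<dots> = - K p x v u" by (simp add: K_T[OF p])
  also have "\<dots> = K p x u v" using K_anti[OF p, of x v u] by simp
  finally show ?thesis .
qed

lemma A_anti: "p \<in> U \<Longrightarrow> A p x u v = - A p x v u"
  using A_K[of p x u v] A_K[of p x v u] K_anti[of p x u v] by linarith

lemma A_cyc: "p \<in> U \<Longrightarrow> A p x u v + A p u v x + A p v x u = 0"
  using A_K[of p x u v] A_K[of p u v x] A_K[of p v x u] K_cyc[of p x u v] by linarith

lemma A_J: "p \<in> U \<Longrightarrow> A p x (J p *v u) v = A p x u (J p *v v)"
  unfolding A_def using JG2 T_J by (simp add: bil_neg1)

lemma A_neg3: "A p x u (- v) = - A p x u v"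
  unfolding A_def by (simp add: bil_neg2)

end

lemma P2_abstract:
  fixes A :: "'v::ab_group_add \<Rightarrow> 'v \<Rightarrow> 'v \<Rightarrow> real" and j :: "'v \<Rightarrow> 'v"
  assumes cyc: "\<And>x u v. A x u v + A u v x + A v x u = 0"
    and anti: "\<And>x u v. A x u v = - A x v u"
    and jsw: "\<And>x u v. A x (j u) v = A x u (j v)"
    and jj: "\<And>v. j (j v) = - v"
    and neg: "\<And>x u v. A x u (- v) = - A x u v"
  shows "A (j x) u v = A x u (j v)"
proof -
  have negm: "A x (- u) v = - A x u v" for x u v
    using anti[of x "- u" v] neg[of x v u] anti[of x v u] by simp
  have negf: "A (- x) u v = - A x u v" for x u v
  proof -
    have "A (- x) u v = - A u v (- x) - A v (- x) u" using cyc[of "- x" u v] by linarith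
    also have "\<dots> = A u v x + A v x u" by (simp add: neg negm)
    also have "\<dots> = - A x u v" using cyc[of x u v] by linarith
    finally show ?thesis .
  qed
  define D where "D x u v = A (j x) u v - A x u (j v)" for x u v
  have Dcyc: "D x u v = D v x u" for x u v
  proof -
    have 1: "A (j x) u v = - A u (j v) x - A v x (j u)"
      using cyc[of "j x" u v] jsw[of u v x] jsw[of v x u] by linarith
    have 2: "A x u (j v) = - A u (j v) x - A (j v) x u"
      using cyc[of x u "j v"] by linarith
    show ?thesis unfolding D_def using 1 2 by linarith
  qed
  have Danti: "D x u v = - D x v u" for x u v
  proof -
    have "A x v (j u) = - A x u (j v)"
      using anti[of x v "j u"] jsw[of x v u] anti[of x u "j v"] by simp
    then show ?thesis unfolding D_def using anti[of "j x" u v] by simp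
  qed
  have Da: "D (j x) u v = - D x u (j v)" for x u v
    unfolding D_def by (simp add: jj negf neg)
  have sw: "D u x v = - D x u v" for x u v
    using Dcyc[of u x v] Danti[of v u x] Dcyc[of x u v] by linarith
  have E: "D (j a) b c = 0" for a b c
  proof -
    have e1: "D (j a) b c = - D a b (j c)" by (rule Da)
    have e2: "D a (j b) c = - D a b (j c)"
      using sw[of a "j b" c] Da[of b a c] sw[of b a "j c"] by linarith
    have e3: "D a (j b) c = - D (j a) b c"
      using Dcyc[of "j b" c a] Da[of b c a] Dcyc[of b c "j a"] by linarith
    show ?thesis using e1 e2 e3 by linarith
  qed
  have "D x u v = 0"
    using E[of "j (- x)" u v] jj[of "- x"] by simp
  then show ?thesis unfolding D_def by simp
qed

context AK
begin

lemma A_P2: "p \<in> U \<Longrightarrow> A p (J p *v x) u v = A p x u (J p *v v)"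
proof -
  assume p: "p \<in> U"
  show ?thesis
  proof (rule P2_abstract[of "A p" "\<lambda>v. J p *v v"])
    show "A p x u v + A p u v x + A p v x u = 0" for x u v by (rule A_cyc[OF p])
    show "A p x u v = - A p x v u" for x u v by (rule A_anti[OF p])
    show "A p x (J p *v u) v = A p x u (J p *v v)" for x u v by (rule A_J[OF p])
    show "J p *v (J p *v v) = - v" for v by (rule JJv[OF p])
    show "A p x u (- v) = - A p x u v" for x u v by (rule A_neg3)
  qed
qed

lemma T_Jx: "p \<in> U \<Longrightarrow> T p (J p *v x) u = - (J p *v T p x u)"
proof -
  assume p: "p \<in> U"
  have "bil (g p) (T p (J p *v x) u + J p *v T p x u) v = 0" for v
  proof -
    have "bil (g p) (T p (J p *v x) u + J p *v T p x u) v
        = A p (J p *v x) u v + bil (g p) (J p *v T p x u) v"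
      by (simp add: A_def bil_add1)
    also have "\<dots> = A p x u (J p *v v) - bil (g p) (T p x u) (J p *v v)"
      using A_P2[OF p, of x u v] JG2[OF p, of "T p x u" v] by linarith
    also have "\<dots> = 0" by (simp add: A_def)
    finally show ?thesis .
  qed
  then have "T p (J p *v x) u + J p *v T p x u = 0" using gnondeg[OF p] by blast
  then show ?thesis by (simp add: eq_neg_iff_add_eq_0)
qed

end

context AK
begin

lemma TT_Jx: "p \<in> U \<Longrightarrow> T p x (T p (J p *v x) w) = J p *v T p x (T p x w)"
proof -
  assume p: "p \<in> U"
  show ?thesis by (simp add: T_Jx[OF p] T_neg[OF p] T_J[OF p])
qed

lemma C_eval:
  assumes p: "p \<in> U"
  shows "T p x (T p (J p *v x) w) - T p (J p *v x) (T p x w) = J p *v T p x (T p x w) + J p *v T p x (T p x w)"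
  by (simp only: TT_Jx[OF p]) (simp add: T_Jx[OF p])

lemma T_zero:
  assumes p: "p \<in> U"
    and h: "bil (g p) (T p x (T p (J p *v x) (J p *v y)) - T p (J p *v x) (T p x (J p *v y))) y
          = bil (g p) (T p x (T p (J p *v x) y) - T p (J p *v x) (T p x y)) (J p *v y)"
  shows "T p x y = 0"
proof -
  let ?Q = "bil (g p) (T p x y) (T p x y)"
  have a: "bil (g p) (T p x (T p x y)) y = - ?Q"
    using A_anti[OF p, of x "T p x y" y] by (simp add: A_def)
  have "bil (g p) (T p x (T p (J p *v x) y) - T p (J p *v x) (T p x y)) (J p *v y)
      = bil (g p) (J p *v T p x (T p x y)) (J p *v y) + bil (g p) (J p *v T p x (T p x y)) (J p *v y)"
    by (simp only: C_eval[OF p] bil_add1)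
  also have "\<dots> = - 2 * ?Q" unfolding JG1[OF p] a by simp
  finally have r: "bil (g p) (T p x (T p (J p *v x) y) - T p (J p *v x) (T p x y)) (J p *v y) = - 2 * ?Q" .
  have tj: "T p x (T p x (J p *v y)) = J p *v T p x (T p x y)"
    by (simp add: T_J[OF p] T_neg[OF p])
  have "bil (g p) (T p x (T p (J p *v x) (J p *v y)) - T p (J p *v x) (T p x (J p *v y))) y
      = bil (g p) (J p *v T p x (T p x (J p *v y))) y + bil (g p) (J p *v T p x (T p x (J p *v y))) y"
    by (simp only: C_eval[OF p] bil_add1)
  also have "\<dots> = 2 * ?Q"
    unfolding tj JJv[OF p] bil_neg1 a by simp
  finally have l: "bil (g p) (T p x (T p (J p *v x) (J p *v y)) - T p (J p *v x) (T p x (J p *v y))) y = 2 * ?Q" .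
  have "?Q = 0" using h l r by linarith
  then show ?thesis using gpos0[OF p] by blast
qed

lemma N_expr:
  assumes p: "p \<in> U" and X: "X differentiable (at p)" and Y: "Y differentiable (at p)"
  shows "nijenhuis J X Y p
    = frechet_derivative J (at p) (J p *v X p) *v Y p - frechet_derivative J (at p) (J p *v Y p) *v X p
      + J p *v (frechet_derivative J (at p) (Y p) *v X p) - J p *v (frechet_derivative J (at p) (X p) *v Y p)"
proof -
  let ?d = "frechet_derivative J (at p)" and ?dX = "frechet_derivative X (at p)"
    and ?dY = "frechet_derivative Y (at p)"
  have fX: "frechet_derivative (app J X) (at p) v = ?d v *v X p + J p *v ?dX v" for v
    unfolding app_def by (rule fd_app[OF Jd[OF p] X])
  have fY: "frechet_derivative (app J Y) (at p) v = ?d v *v Y p + J p *v ?dY v" for v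
    unfolding app_def by (rule fd_app[OF Jd[OF p] Y])
  have aX: "app J X p = J p *v X p" and aY: "app J Y p = J p *v Y p" by (simp_all add: app_def)
  show ?thesis
    unfolding nijenhuis_def lie_def fX fY aX aY
    by (simp add: matrix_vector_right_distrib matrix_vector_mult_diff_distrib JJv[OF p] algebra_simps)
qed

lemma N_zero:
  assumes p: "p \<in> U" and X: "X differentiable (at p)" and Y: "Y differentiable (at p)"
    and T0: "\<And>x y. T p x y = 0"
  shows "nijenhuis J X Y p = 0"
proof -
  let ?d = "frechet_derivative J (at p)" and ?G = "christoffel g p"
  have dT: "?d u *v w = J p *v ?G u w - ?G u (J p *v w)" for u w
    using T0[of u w] unfolding T_def by (simp add: algebra_simps)
  let ?x = "X p" and ?y = "Y p"
  have "nijenhuis J X Y p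
      = J p *v ?G (J p *v ?x) ?y - ?G (J p *v ?x) (J p *v ?y)
      - (J p *v ?G (J p *v ?y) ?x - ?G (J p *v ?y) (J p *v ?x))
      + (- ?G ?y ?x - J p *v ?G ?y (J p *v ?x))
      - (- ?G ?x ?y - J p *v ?G ?x (J p *v ?y))"
    unfolding N_expr[OF p X Y] dT
    by (simp add: matrix_vector_mult_diff_distrib JJv[OF p])
  also have "\<dots> = 0"
    using chr_sym[OF p, of "J p *v ?x" ?y] chr_sym[OF p, of "J p *v ?y" ?x]
      chr_sym[OF p, of "J p *v ?x" "J p *v ?y"] chr_sym[OF p, of ?x ?y]
    by simp
  finally show ?thesis .
qed

end

context AK
begin

lemma dmat_diff:
  fixes A :: "real^'n \<Rightarrow> real^'n^'n"
  assumes A: "smooth_mf U A" and p: "p \<in> U" and u: "u differentiable (at p)"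
  shows "(\<lambda>q. frechet_derivative A (at q) (u q)) differentiable (at p)"
proof (rule diff_local[OF U p, of "\<lambda>q. \<chi> i j. \<Sum>m\<in>UNIV. u q $ m * pd (\<lambda>x. A x $ i $ j) m q"])
  fix q assume q: "q \<in> U"
  show "(\<chi> i j. \<Sum>m\<in>UNIV. u q $ m * pd (\<lambda>x. A x $ i $ j) m q) = frechet_derivative A (at q) (u q)"
    by (simp add: vec_eq_iff fd_mat[OF mf_diff[OF A q]] fd_basis[OF mf_comp_diff[OF A q]])
next
  have pdd: "(\<lambda>q. pd (\<lambda>x. A x $ i $ j) m q) differentiable (at p)" for i j m
    using A p unfolding smooth_mf_def using cinf_pd cinf_diff by blast
  show "(\<lambda>q. \<chi> i j. \<Sum>m\<in>UNIV. u q $ m * pd (\<lambda>x. A x $ i $ j) m q) differentiable (at p)"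
    unfolding diff_vec
  proof (intro allI)
    fix i j
    have "(\<lambda>q. \<Sum>m\<in>UNIV. u q $ m * pd (\<lambda>x. A x $ i $ j) m q) differentiable (at p)"
      by (intro differentiable_sum ballI differentiable_mult vdiff_comp[OF u] pdd) simp_all
    then show "(\<lambda>x. (\<chi> i j. \<Sum>m\<in>UNIV. u x $ m * pd (\<lambda>x. A x $ i $ j) m x) $ i $ j) differentiable (at p)"
      by simp
  qed
qed

lemma dvec_diff:
  assumes Z: "smooth_vf U Z" and p: "p \<in> U" and u: "u differentiable (at p)"
  shows "(\<lambda>q. frechet_derivative Z (at q) (u q)) differentiable (at p)"
proof (rule diff_local[OF U p, of "\<lambda>q. \<chi> j. \<Sum>m\<in>UNIV. u q $ m * pd (\<lambda>x. Z x $ j) m q"])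
  fix q assume q: "q \<in> U"
  show "(\<chi> j. \<Sum>m\<in>UNIV. u q $ m * pd (\<lambda>x. Z x $ j) m q) = frechet_derivative Z (at q) (u q)"
    by (simp add: vec_eq_iff fd_vec[OF vf_diff[OF Z q]] fd_basis[OF vf_comp_diff[OF Z q]])
next
  have pdd: "(\<lambda>q. pd (\<lambda>x. Z x $ j) m q) differentiable (at p)" for j m
    using Z p unfolding smooth_vf_def using cinf_pd cinf_diff by blast
  show "(\<lambda>q. \<chi> j. \<Sum>m\<in>UNIV. u q $ m * pd (\<lambda>x. Z x $ j) m q) differentiable (at p)"
    unfolding diff_vec
  proof (intro allI)
    fix j
    have "(\<lambda>q. \<Sum>m\<in>UNIV. u q $ m * pd (\<lambda>x. Z x $ j) m q) differentiable (at p)"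
      by (intro differentiable_sum ballI differentiable_mult vdiff_comp[OF u] pdd) simp_all
    then show "(\<lambda>x. (\<chi> j. \<Sum>m\<in>UNIV. u x $ m * pd (\<lambda>x. Z x $ j) m x) $ j) differentiable (at p)"
      by simp
  qed
qed

lemma wv_diff:
  assumes p: "p \<in> U" and a: "a differentiable (at p)" and b: "b differentiable (at p)"
  shows "(\<lambda>q. wv q (a q) (b q)) differentiable (at p)"
  unfolding wv_def diff_vec
proof (intro allI)
  fix l
  have 1: "(\<lambda>q. frechet_derivative g (at q) (a q)) differentiable (at p)" by (rule dmat_diff[OF gs p a])
  have 2: "(\<lambda>q. frechet_derivative g (at q) (b q)) differentiable (at p)" by (rule dmat_diff[OF gs p b])
  have 3: "(\<lambda>q. frechet_derivative g (at q) (axis l 1)) differentiable (at p)" by (rule dmat_diff[OF gs p]) simp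
  have "(\<lambda>q. (bil (frechet_derivative g (at q) (a q)) (b q) (axis l 1)
     + bil (frechet_derivative g (at q) (b q)) (a q) (axis l 1)
     - bil (frechet_derivative g (at q) (axis l 1)) (a q) (b q)) / 2) differentiable (at p)"
    by (intro differentiable_divide differentiable_add differentiable_diff bil_diff 1 2 3 a b differentiable_const) simp
  then show "(\<lambda>q. (\<chi> l. (bil (frechet_derivative g (at q) (a q)) (b q) (axis l 1)
     + bil (frechet_derivative g (at q) (b q)) (a q) (axis l 1)
     - bil (frechet_derivative g (at q) (axis l 1)) (a q) (b q)) / 2) $ l) differentiable (at p)"
    by simp
qed

lemma chr_diff:
  assumes p: "p \<in> U" and a: "a differentiable (at p)" and b: "b differentiable (at p)"
  shows "(\<lambda>q. christoffel g q (a q) (b q)) differentiable (at p)"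
  unfolding chr_wv
  by (rule minv_diff[OF U p ginv gd[OF p] wv_diff[OF p a b]])

lemma lc_diffble:
  assumes X: "smooth_vf U X" and Z: "smooth_vf U Z" and p: "p \<in> U"
  shows "lc g X Z differentiable (at p)"
proof -
  have "(\<lambda>q. frechet_derivative Z (at q) (X q) + christoffel g q (X q) (Z q)) differentiable (at p)"
    by (intro differentiable_add dvec_diff[OF Z p] chr_diff[OF p] vf_diff[OF X p] vf_diff[OF Z p])
  then show ?thesis unfolding lc_def by (simp add: fun_eq_iff)
qed

lemma lc_local:
  assumes p: "p \<in> U" and e: "\<And>q. q \<in> U \<Longrightarrow> F q = F' q"
  shows "lc g X F p = lc g X F' p"
  unfolding lc_def using fd_local[OF U p e] e[OF p] by simp

lemma lc_add:
  assumes p: "p \<in> U" and F: "F differentiable (at p)" and F': "F' differentiable (at p)"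
  shows "lc g X (\<lambda>q. F q + F' q) p = lc g X F p + lc g X F' p"
  unfolding lc_def by (simp add: fd_add[OF F F'] chr_add2[OF p])

lemma lc_diff:
  assumes p: "p \<in> U" and F: "F differentiable (at p)" and F': "F' differentiable (at p)"
  shows "lc g X (\<lambda>q. F q - F' q) p = lc g X F p - lc g X F' p"
  unfolding lc_def by (simp add: fd_diff[OF F F'] chr_diff2[OF p])

lemma lc_scale:
  assumes p: "p \<in> U" and F: "F differentiable (at p)"
  shows "lc g X (\<lambda>q. c *\<^sub>R F q) p = c *\<^sub>R lc g X F p"
  unfolding lc_def by (simp add: fd_scale[OF F] chr_scale2[OF p] scaleR_add_right)

lemma lc_neg:
  assumes p: "p \<in> U" and F: "F differentiable (at p)"
  shows "lc g X (\<lambda>q. - F q) p = - lc g X F p"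
  unfolding lc_def by (simp add: fd_neg[OF F] chr_neg2[OF p])

lemma lc_app:
  assumes p: "p \<in> U" and F: "F differentiable (at p)"
  shows "lc g X (app J F) p = J p *v lc g X F p + T p (X p) (F p)"
proof -
  have "lc g X (app J F) p = frechet_derivative J (at p) (X p) *v F p + J p *v frechet_derivative F (at p) (X p)
      + christoffel g p (X p) (J p *v F p)"
    unfolding lc_def app_def by (simp add: fd_app[OF Jd[OF p] F])
  then show ?thesis
    unfolding lc_def T_def by (simp add: matrix_vector_right_distrib algebra_simps)
qed

lemma herm_eq:
  assumes p: "p \<in> U"
  shows "herm g J X F p = (1/2) *\<^sub>R lc g X F p - (1/2) *\<^sub>R (J p *v lc g X (app J F) p)"
proof -
  have "herm g J X F p = lc g X F p - (1/2) *\<^sub>R (J p *v lc g X (app J F) p)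
      + (1/2) *\<^sub>R (J p *v (J p *v lc g X F p))"
    unfolding herm_def by (simp add: matrix_vector_mult_diff_distrib algebra_simps)
  also have "\<dots> = (1/2) *\<^sub>R lc g X F p - (1/2) *\<^sub>R (J p *v lc g X (app J F) p)"
    by (simp add: JJv[OF p] vec_eq_iff)
  finally show ?thesis .
qed

lemma herm_herm:
  assumes p: "p \<in> U" and Z: "Z differentiable (at p)"
    and W1: "lc g Y Z differentiable (at p)" and W2: "lc g Y (app J Z) differentiable (at p)"
  shows "herm g J X (herm g J Y Z) p
    = (1/2) *\<^sub>R lc g X (lc g Y Z) p - (1/2) *\<^sub>R (J p *v lc g X (lc g Y (app J Z)) p)
      - (1/4) *\<^sub>R T p (X p) (T p (Y p) (Z p))"
proof -
  let ?W1 = "lc g Y Z" and ?W2 = "lc g Y (app J Z)" and ?V = "herm g J Y Z"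
  let ?x = "X p"
  have V: "?V q = (1/2) *\<^sub>R ?W1 q - (1/2) *\<^sub>R (J q *v ?W2 q)" if "q \<in> U" for q
    using herm_eq[OF that] .
  have jV: "app J ?V q = (1/2) *\<^sub>R (J q *v ?W1 q) + (1/2) *\<^sub>R ?W2 q" if q: "q \<in> U" for q
    unfolding app_def V[OF q]
    by (simp add: matrix_vector_mult_diff_distrib matrix_vector_mult_scaleR JJv[OF q])
  have jW2d: "(\<lambda>q. J q *v ?W2 q) differentiable (at p)" by (rule app_diff[OF Jd[OF p] W2])
  have jW1d: "(\<lambda>q. J q *v ?W1 q) differentiable (at p)" by (rule app_diff[OF Jd[OF p] W1])
  have e1: "lc g X ?V p = (1/2) *\<^sub>R lc g X ?W1 p - (1/2) *\<^sub>R (J p *v lc g X ?W2 p + T p ?x (?W2 p))"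
  proof -
    have "lc g X ?V p = lc g X (\<lambda>q. (1/2) *\<^sub>R ?W1 q - (1/2) *\<^sub>R (J q *v ?W2 q)) p"
      by (rule lc_local[OF p V])
    also have "\<dots> = lc g X (\<lambda>q. (1/2) *\<^sub>R ?W1 q) p - lc g X (\<lambda>q. (1/2) *\<^sub>R (J q *v ?W2 q)) p"
      by (rule lc_diff[OF p]) (intro differentiable_scaleR differentiable_const W1 jW2d)+
    also have "\<dots> = (1/2) *\<^sub>R lc g X ?W1 p - (1/2) *\<^sub>R lc g X (app J ?W2) p"
      using lc_scale[OF p W1] lc_scale[OF p jW2d] by (simp add: app_def)
    also have "\<dots> = (1/2) *\<^sub>R lc g X ?W1 p - (1/2) *\<^sub>R (J p *v lc g X ?W2 p + T p ?x (?W2 p))"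
      by (simp add: lc_app[OF p W2])
    finally show ?thesis .
  qed
  have e2: "lc g X (app J ?V) p = (1/2) *\<^sub>R (J p *v lc g X ?W1 p + T p ?x (?W1 p)) + (1/2) *\<^sub>R lc g X ?W2 p"
  proof -
    have "lc g X (app J ?V) p = lc g X (\<lambda>q. (1/2) *\<^sub>R (J q *v ?W1 q) + (1/2) *\<^sub>R ?W2 q) p"
      by (rule lc_local[OF p jV])
    also have "\<dots> = lc g X (\<lambda>q. (1/2) *\<^sub>R (J q *v ?W1 q)) p + lc g X (\<lambda>q. (1/2) *\<^sub>R ?W2 q) p"
      by (rule lc_add[OF p]) (intro differentiable_scaleR differentiable_const W2 jW1d)+
    also have "\<dots> = (1/2) *\<^sub>R lc g X (app J ?W1) p + (1/2) *\<^sub>R lc g X ?W2 p"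
      using lc_scale[OF p W2] lc_scale[OF p jW1d] by (simp add: app_def)
    also have "\<dots> = (1/2) *\<^sub>R (J p *v lc g X ?W1 p + T p ?x (?W1 p)) + (1/2) *\<^sub>R lc g X ?W2 p"
      by (simp add: lc_app[OF p W1])
    finally show ?thesis .
  qed
  have e3: "T p ?x (?W2 p) = - (J p *v T p ?x (?W1 p)) + T p ?x (T p (Y p) (Z p))"
    by (simp add: lc_app[OF p Z] T_add[OF p] T_J[OF p])
  show ?thesis
    unfolding herm_eq[OF p, of X ?V] e1 e2 e3
    by (simp add: matrix_vector_right_distrib matrix_vector_mult_diff_distrib matrix_vector_mult_scaleR
        JJv[OF p] mat_vec_neg vec_eq_iff algebra_simps)
qed

definition Rv where
  "Rv X Y Z p = lc g X (lc g Y Z) p - lc g Y (lc g X Z) p - lc g (lie X Y) Z p"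

lemma curv_lc: "curv g (lc g) X Y Z W p = bil (g p) (Rv X Y Z p) (W p)"
  by (simp add: curv_def Rv_def)

lemma curv_herm:
  assumes p: "p \<in> U" and X: "smooth_vf U X" and Y: "smooth_vf U Y" and Z: "smooth_vf U Z"
  shows "curv g (herm g J) X Y Z W p = bil (g p)
     ((1/2) *\<^sub>R Rv X Y Z p - (1/2) *\<^sub>R (J p *v Rv X Y (app J Z) p)
      - (1/4) *\<^sub>R (T p (X p) (T p (Y p) (Z p)) - T p (Y p) (T p (X p) (Z p)))) (W p)"
proof -
  have Zd: "Z differentiable (at p)" by (rule vf_diff[OF Z p])
  have JZ: "smooth_vf U (app J Z)" by (rule app_smooth[OF U Js Z])
  have h1: "herm g J X (herm g J Y Z) p
    = (1/2) *\<^sub>R lc g X (lc g Y Z) p - (1/2) *\<^sub>R (J p *v lc g X (lc g Y (app J Z)) p)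
      - (1/4) *\<^sub>R T p (X p) (T p (Y p) (Z p))"
    by (rule herm_herm[OF p Zd lc_diffble[OF Y Z p] lc_diffble[OF Y JZ p]])
  have h2: "herm g J Y (herm g J X Z) p
    = (1/2) *\<^sub>R lc g Y (lc g X Z) p - (1/2) *\<^sub>R (J p *v lc g Y (lc g X (app J Z)) p)
      - (1/4) *\<^sub>R T p (Y p) (T p (X p) (Z p))"
    by (rule herm_herm[OF p Zd lc_diffble[OF X Z p] lc_diffble[OF X JZ p]])
  have h3: "herm g J (lie X Y) Z p
    = (1/2) *\<^sub>R lc g (lie X Y) Z p - (1/2) *\<^sub>R (J p *v lc g (lie X Y) (app J Z) p)"
    by (rule herm_eq[OF p])
  show ?thesis
    unfolding curv_def h1 h2 h3 Rv_def
    by (simp add: matrix_vector_right_distrib matrix_vector_mult_diff_distrib matrix_vector_mult_scaleR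
        vec_eq_iff algebra_simps)
qed

lemma Rv_JJ:
  assumes p: "p \<in> U" and X: "smooth_vf U X" and Y: "smooth_vf U Y" and Z: "smooth_vf U Z"
  shows "Rv X Y (app J (app J Z)) p = - Rv X Y Z p"
proof -
  have jj: "app J (app J Z) q = - Z q" if "q \<in> U" for q
    using JJv[OF that] by (simp add: app_def)
  have nZ: "(\<lambda>q. - Z q) differentiable (at q)" if "q \<in> U" for q
    using vf_diff[OF Z that] by simp
  have l1: "lc g A (app J (app J Z)) q = - lc g A Z q" if q: "q \<in> U" for q A
  proof -
    have "lc g A (app J (app J Z)) q = lc g A (\<lambda>q. - Z q) q" by (rule lc_local[OF q jj])
    also have "\<dots> = - lc g A Z q" by (rule lc_neg[OF q vf_diff[OF Z q]])
    finally show ?thesis .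
  qed
  have l2: "lc g B (lc g A (app J (app J Z))) p = - lc g B (lc g A Z) p" if A: "smooth_vf U A" for A B
  proof -
    have "lc g B (lc g A (app J (app J Z))) p = lc g B (\<lambda>q. - lc g A Z q) p"
      by (rule lc_local[OF p l1])
    also have "\<dots> = - lc g B (lc g A Z) p" by (rule lc_neg[OF p lc_diffble[OF A Z p]])
    finally show ?thesis .
  qed
  show ?thesis
    unfolding Rv_def l2[OF X] l2[OF Y] l1[OF p] by simp
qed


lemma main_AK:
  assumes hyp: "\<forall>X Y. smooth_vf U X \<longrightarrow> smooth_vf U Y \<longrightarrow>
           (\<forall>p\<in>U. curv g (herm g J) X (app J X) Y (app J Y) p
                  = curv g (lc g) X (app J X) Y (app J Y) p)"
  shows "integrable_acs U J"
  unfolding integrable_acs_def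
proof (intro allI impI ballI)
  fix X Y p
  assume X: "smooth_vf U X" and Y: "smooth_vf U Y" and p: "p \<in> U"
  have T0: "T p x y = 0" for x y
  proof -
    let ?X = "\<lambda>_::real^'n. x" and ?Y = "\<lambda>_::real^'n. y"
    have sX: "smooth_vf U ?X" and sY: "smooth_vf U ?Y" using const_smooth[OF U] by auto
    have sJX: "smooth_vf U (app J ?X)" and sJY: "smooth_vf U (app J ?Y)"
      using app_smooth[OF U Js] sX sY by auto
    have sJJY: "smooth_vf U (app J (app J ?Y))" using app_smooth[OF U Js sJY] .
    let ?G = "bil (g p)" and ?Jv = "\<lambda>v. J p *v v"
    let ?a = "Rv ?X (app J ?X) ?Y p" and ?b = "Rv ?X (app J ?X) (app J ?Y) p"
    let ?C = "\<lambda>w. T p x (T p (J p *v x) w) - T p (J p *v x) (T p x w)"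
    have aX: "app J ?X p = J p *v x" and aY: "app J ?Y p = J p *v y"
      and aJY: "app J (app J ?Y) p = J p *v (J p *v y)" by (simp_all add: app_def)
    have i1: "?G ((1/2) *\<^sub>R ?a - (1/2) *\<^sub>R (J p *v ?b) - (1/4) *\<^sub>R ?C y) (J p *v y) = ?G ?a (J p *v y)"
      using hyp[rule_format, OF sX sY p] curv_herm[OF p sX sJX sY, of "app J ?Y"] curv_lc[of ?X "app J ?X" ?Y "app J ?Y" p]
      by (simp add: aX aY)
    have i2: "?G ((1/2) *\<^sub>R ?b - (1/2) *\<^sub>R (J p *v (- ?a)) - (1/4) *\<^sub>R ?C (J p *v y)) (- y) = ?G ?b (- y)"
      using hyp[rule_format, OF sX sJY p] curv_herm[OF p sX sJX sJY, of "app J (app J ?Y)"]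
        curv_lc[of ?X "app J ?X" "app J ?Y" "app J (app J ?Y)" p] Rv_JJ[OF p sX sJX sY]
      by (simp add: aX aY aJY JJv[OF p])
    have i1': "(1/2) * ?G ?a (J p *v y) - (1/2) * ?G ?b y - (1/4) * ?G (?C y) (J p *v y) = ?G ?a (J p *v y)"
      using i1 by (simp add: bil_diff1 bil_scale1 JG1[OF p])
    have i2': "- (1/2) * ?G ?b y + (1/2) * ?G ?a (J p *v y) + (1/4) * ?G (?C (J p *v y)) y = - ?G ?b y"
      using i2 by (simp add: bil_diff1 bil_add1 bil_scale1 bil_neg1 bil_neg2 mat_vec_neg JG2[OF p])
    have "?G (?C (J p *v y)) y = ?G (?C y) (J p *v y)" using i1' i2' by linarith
    then show ?thesis by (rule T_zero[OF p])
  qed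
  show "nijenhuis J X Y p = 0"
    by (rule N_zero[OF p vf_diff[OF X p] vf_diff[OF Y p] T0])
qed

end

theorem mainTheorem8:
  fixes U :: "(real^'n::finite) set" and g J \<kappa> :: "real^'n \<Rightarrow> real^'n^'n"
  assumes "almost_kahler U g J \<kappa>"
    and "\<forall>X Y. smooth_vf U X \<longrightarrow> smooth_vf U Y \<longrightarrow>
           (\<forall>p\<in>U. curv g (herm g J) X (app J X) Y (app J Y) p
                  = curv g (lc g) X (app J X) Y (app J Y) p)"
  shows "integrable_acs U J"
proof -
  interpret AK U g J \<kappa> by (rule AK.intro) (rule assms(1))
  show ?thesis by (rule main_AK[OF assms(2)])
qed

end
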